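(* For $i=1,2$, let $[x^{(i)}_k]_{k=0}^N$ be a zero-mean nonsingular Gaussian Markov sequence obeying the forward Markov model $$x^{(i)}_k=M^{(i)}_{k,k-1}x^{(i)}_{k-1}+e^{M,(i)}_k,\ k\in[1,N],\qquad x^{(i)}_0=e^{M,(i)}_0,$$ where $[e^{M,(i)}_k]$ is a zero-mean white nonsingular Gaussian sequence with $\mathrm{Cov}(e^{M,(i)}_k)=M^{(i)}_k$. Then the two sequences share the same reciprocal model if and only if $$(M^{(1)}_k)^{-1}+(M^{(1)}_{k+1,k})'(M^{(1)}_{k+1})^{-1}M^{(1)}_{k+1,k}=(M^{(2)}_k)^{-1}+(M^{(2)}_{k+1,k})'(M^{(2)}_{k+1})^{-1}M^{(2)}_{k+1,k},\quad k\in[1,N-1],$$ and $$(M^{(1)}_{k+1,k})'(M^{(1)}_{k+1})^{-1}=(M^{(2)}_{k+1,k})'(M^{(2)}_{k+1})^{-1},\quad k\in[0,N-1].$$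
   Context: $[0,N]=(0,1,\ldots,N)$; $x=[x_0',\ldots,x_N']'$, $C=\mathrm{Cov}(x)$, $'$ denotes transpose. Every zero-mean nonsingular Gaussian Markov sequence is reciprocal and obeys a reciprocal model $R^0_kx_k-R^-_kx_{k-1}-R^+_kx_{k+1}=e^R_k$, $k\in[1,N-1]$, whose coefficients are determined by the block entries of $C^{-1}$: writing $A_k$ for the $(k,k)$ block and $B_k$ for the $(k,k+1)$ block of $C^{-1}$ (blocks indexed from $0$), $R^0_k=A_k$, $R^+_k=-B_k$, $R^-_k=-B_{k-1}'$. Two sequences share the same reciprocal model if these coefficients $R^0_k,R^-_k,R^+_k$, $k\in[1,N-1]$, coincide, i.e. their $C^{-1}$ have the same blocks $A_1,\ldots,A_{N-1}$ and $B_0,\ldots,B_{N-1}$. *)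

theory Defs
  imports "Jordan_Normal_Form.Matrix"
begin

definition minv :: "real mat \<Rightarrow> real mat" where
  "minv A = (SOME B. B \<in> carrier_mat (dim_row A) (dim_row A) \<and>
                     A * B = 1\<^sub>m (dim_row A) \<and> B * A = 1\<^sub>m (dim_row A))"

text \<open>Symmetric positive definite d x d matrix (nonsingular covariance).\<close>
definition spd :: "nat \<Rightarrow> real mat \<Rightarrow> bool" where
  "spd d A \<longleftrightarrow> A \<in> carrier_mat d d \<and> A\<^sup>T = A \<and>
     (\<forall>v \<in> carrier_vec d. v \<noteq> 0\<^sub>v d \<longrightarrow> v \<bullet> (A *\<^sub>v v) > 0)"

text \<open>Forward Markov model x_k = F k x_{k-1} + e_k (F k = M_{k,k-1}), x_0 = e_0,
  Cov(e_k) = Q k = M_k, e white. State transition matrix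
  Phi(j+m, j) = F (j+m) * ... * F (j+1) is  trans F d j m.\<close>
fun trans :: "(nat \<Rightarrow> real mat) \<Rightarrow> nat \<Rightarrow> nat \<Rightarrow> nat \<Rightarrow> real mat" where
  "trans F d j 0 = 1\<^sub>m d"
| "trans F d j (Suc m) = F (j + Suc m) * trans F d j m"

definition Phi :: "(nat \<Rightarrow> real mat) \<Rightarrow> nat \<Rightarrow> nat \<Rightarrow> nat \<Rightarrow> real mat" where
  "Phi F d k j = trans F d j (k - j)"

text \<open>Covariance C = Cov(x) of the stacked vector x = [x_0',...,x_N']' of the model:
  since x_k = sum_{j<=k} Phi(k,j) e_j with e white,
  C_{k,l} = sum_{j <= min k l} Phi(k,j) M_j Phi(l,j)'.
  Entry (k*d+a, l*d+b) is entry (a,b) of block (k,l).\<close>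
definition markov_cov :: "nat \<Rightarrow> nat \<Rightarrow> (nat \<Rightarrow> real mat) \<Rightarrow> (nat \<Rightarrow> real mat) \<Rightarrow> real mat" where
  "markov_cov d N F Q = mat ((N+1)*d) ((N+1)*d) (\<lambda>(i,i').
     let k = i div d; a = i mod d; l = i' div d; b = i' mod d in
     (\<Sum>j\<in>{0..min k l}. \<Sum>p<d. \<Sum>q<d.
        Phi F d k j $$ (a,p) * Q j $$ (p,q) * Phi F d l j $$ (b,q)))"

definition blk :: "nat \<Rightarrow> real mat \<Rightarrow> nat \<Rightarrow> nat \<Rightarrow> real mat" where
  "blk d C k l = mat d d (\<lambda>(a,b). C $$ (k*d + a, l*d + b))"

text \<open>Two sequences with covariances C1, C2 share the same reciprocal model iff
  C^{-1} have the same blocks A_k = (k,k), k in [1,N-1], and B_k = (k,k+1), k in [0,N-1].\<close>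
definition same_reciprocal_model :: "nat \<Rightarrow> nat \<Rightarrow> real mat \<Rightarrow> real mat \<Rightarrow> bool" where
  "same_reciprocal_model d N C1 C2 \<longleftrightarrow>
     (\<forall>k. 1 \<le> k \<and> k < N \<longrightarrow> blk d (minv C1) k k = blk d (minv C2) k k) \<and>
     (\<forall>k. k < N \<longrightarrow> blk d (minv C1) k (k+1) = blk d (minv C2) k (k+1))"

end

theory Submission imports Defs "Jordan_Normal_Form.Determinant" begin


definition bm :: "nat \<Rightarrow> nat \<Rightarrow> (nat \<Rightarrow> nat \<Rightarrow> real mat) \<Rightarrow> real mat" where
  "bm n d B = mat (n*d) (n*d) (\<lambda>(i,j). B (i div d) (j div d) $$ (i mod d, j mod d))"

definition bprod :: "nat \<Rightarrow> nat \<Rightarrow> (nat \<Rightarrow> nat \<Rightarrow> real mat) \<Rightarrow> (nat \<Rightarrow> nat \<Rightarrow> real mat) \<Rightarrow> nat \<Rightarrow> nat \<Rightarrow> real mat" where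
  "bprod n d A B k l = mat d d (\<lambda>(a,b). \<Sum>m<n. (A k m * B m l) $$ (a,b))"

lemma sum_split_mult: "(\<Sum>t<n*d. f t) = (\<Sum>m<n. \<Sum>c<d. f (m*d+c::nat) :: real)"
proof (induction n)
  case 0 then show ?case by simp
next
  case (Suc n)
  have "{..<Suc n * d} = {..<n*d} \<union> {n*d..<n*d+d}" by auto
  then have "(\<Sum>t<Suc n*d. f t) = (\<Sum>t<n*d. f t) + (\<Sum>t\<in>{n*d..<n*d+d}. f t)"
    by (simp add: sum.union_disjoint ivl_disj_int)
  also have "(\<Sum>t\<in>{n*d..<n*d+d}. f t) = (\<Sum>t\<in>{0+n*d..<d+n*d}. f t)"
    by (simp add: add.commute)
  also have "\<dots> = (\<Sum>c\<in>{0..<d}. f (c+n*d))"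
    by (rule sum.shift_bounds_nat_ivl)
  also have "\<dots> = (\<Sum>c<d. f (n*d+c))"
    by (simp add: lessThan_atLeast0 add.commute)
  finally show ?case using Suc by simp
qed

lemma bm_carrier[simp]: "bm n d B \<in> carrier_mat (n*d) (n*d)"
  by (simp add: bm_def)
lemma bm_dims[simp]: "dim_row (bm n d B) = n*d" "dim_col (bm n d B) = n*d"
  by (simp_all add: bm_def)

lemma bm_index: "i < n*d \<Longrightarrow> j < n*d \<Longrightarrow> bm n d B $$ (i,j) = B (i div d) (j div d) $$ (i mod d, j mod d)"
  by (simp add: bm_def)

lemma div_lt: "i < n*d \<Longrightarrow> i div d < (n::nat)"
  by (simp add: less_mult_imp_div_less)
lemma mod_lt: "i < n*d \<Longrightarrow> i mod d < (d::nat)"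
  by (metis mod_less_divisor mult_0_right neq0_conv not_less_zero)

lemma bm_mult:
  assumes "\<And>k m. k<n \<Longrightarrow> m<n \<Longrightarrow> A k m \<in> carrier_mat d d \<and> B k m \<in> carrier_mat d d"
  shows "bm n d A * bm n d B = bm n d (bprod n d A B)"
proof (rule eq_matI)
  fix i j assume i: "i < dim_row (bm n d (bprod n d A B))" and j: "j < dim_col (bm n d (bprod n d A B))"
  then have i': "i < n*d" and j': "j < n*d" by auto
  have "(bm n d A * bm n d B) $$ (i,j) = (\<Sum>t<n*d. bm n d A $$ (i,t) * bm n d B $$ (t,j))"
    using i' j' by (simp add: scalar_prod_def row_def col_def lessThan_atLeast0)
  also have "\<dots> = (\<Sum>m<n. \<Sum>c<d. bm n d A $$ (i,m*d+c) * bm n d B $$ (m*d+c,j))"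
    by (rule sum_split_mult)
  also have "\<dots> = (\<Sum>m<n. (A (i div d) m * B m (j div d)) $$ (i mod d, j mod d))"
  proof (rule sum.cong[OF refl])
    fix m assume m: "m \<in> {..<n}"
    have c: "c < d \<Longrightarrow> m*d+c < n*d" for c
    proof -
      assume "c < d"
      then have "m*d + c < (m+1)*d" by simp
      also have "(m+1)*d \<le> n*d" using m by (intro mult_le_mono1) auto
      finally show ?thesis .
    qed
    have AB: "A (i div d) m \<in> carrier_mat d d" "B m (j div d) \<in> carrier_mat d d"
      using assms div_lt[OF i'] div_lt[OF j'] m by auto
    show "(\<Sum>c<d. bm n d A $$ (i,m*d+c) * bm n d B $$ (m*d+c,j)) = (A (i div d) m * B m (j div d)) $$ (i mod d, j mod d)"
      using AB mod_lt[OF i'] mod_lt[OF j'] i' j' c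
      by (simp add: bm_index scalar_prod_def lessThan_atLeast0)
  qed
  also have "\<dots> = bm n d (bprod n d A B) $$ (i,j)"
    using i' j' mod_lt[OF i'] mod_lt[OF j'] by (simp add: bm_index bprod_def)
  finally show "(bm n d A * bm n d B) $$ (i,j) = bm n d (bprod n d A B) $$ (i,j)" .
qed auto

lemma bm_cong: "(\<And>k l. k<n \<Longrightarrow> l<n \<Longrightarrow> A k l = B k l) \<Longrightarrow> bm n d A = bm n d B"
  unfolding bm_def by (intro eq_matI) (auto simp: div_lt)

lemma bm_transpose:
  assumes "\<And>k l. k<n \<Longrightarrow> l<n \<Longrightarrow> A k l \<in> carrier_mat d d"
  shows "(bm n d A)\<^sup>T = bm n d (\<lambda>k l. (A l k)\<^sup>T)"
proof (rule eq_matI)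
  fix i j assume "i < dim_row (bm n d (\<lambda>k l. (A l k)\<^sup>T))" "j < dim_col (bm n d (\<lambda>k l. (A l k)\<^sup>T))"
  then have i: "i < n*d" and j: "j < n*d" by auto
  have "A (j div d) (i div d) \<in> carrier_mat d d" using assms div_lt i j by blast
  then show "(bm n d A)\<^sup>T $$ (i, j) = bm n d (\<lambda>k l. (A l k)\<^sup>T) $$ (i, j)"
    using i j mod_lt[OF i] mod_lt[OF j] by (simp add: bm_index)
qed auto

lemma bm_one: "bm n d (\<lambda>k l. if k = l then 1\<^sub>m d else 0\<^sub>m d d) = 1\<^sub>m (n*d)"
proof (rule eq_matI)
  fix i j assume "i < dim_row (1\<^sub>m (n*d) :: real mat)" "j < dim_col (1\<^sub>m (n*d) :: real mat)"
  then have i: "i < n*d" and j: "j < n*d" by auto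
  have "(i = j) = (i div d = j div d \<and> i mod d = j mod d)"
    by (metis div_mult_mod_eq)
  then show "bm n d (\<lambda>k l. if k = l then 1\<^sub>m d else 0\<^sub>m d d) $$ (i, j) = 1\<^sub>m (n*d) $$ (i, j)"
    using i j mod_lt[OF i] mod_lt[OF j] by (simp add: bm_index)
qed auto

lemma blk_bm: "k < n \<Longrightarrow> l < n \<Longrightarrow> A k l \<in> carrier_mat d d \<Longrightarrow> blk d (bm n d A) k l = A k l"
proof (rule eq_matI)
  fix a b assume k: "k < n" and l: "l < n" and A: "A k l \<in> carrier_mat d d"
    and a: "a < dim_row (A k l)" and b: "b < dim_col (A k l)"
  have a': "a < d" and b': "b < d" using a b A by auto
  have "k*d + a < n*d"
  proof -
    have "k*d + a < (k+1)*d" using a' by simp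
    also have "(k+1)*d \<le> n*d" using k by (intro mult_le_mono1) auto
    finally show ?thesis .
  qed
  moreover have "l*d + b < n*d"
  proof -
    have "l*d + b < (l+1)*d" using b' by simp
    also have "(l+1)*d \<le> n*d" using l by (intro mult_le_mono1) auto
    finally show ?thesis .
  qed
  ultimately show "blk d (bm n d A) k l $$ (a, b) = A k l $$ (a, b)"
    using a' b' by (simp add: blk_def bm_index)
qed (auto simp: blk_def)

lemma bprod_carrier[simp]: "bprod n d A B k l \<in> carrier_mat d d"
  by (simp add: bprod_def)

lemma bprod_single:
  assumes "m0 < n" "\<And>m. m < n \<Longrightarrow> m \<noteq> m0 \<Longrightarrow> A k m * B m l = 0\<^sub>m d d"
    "A k m0 * B m0 l \<in> carrier_mat d d"
  shows "bprod n d A B k l = A k m0 * B m0 l"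
proof (rule eq_matI)
  fix a b assume "a < dim_row (A k m0 * B m0 l)" "b < dim_col (A k m0 * B m0 l)"
  then have a: "a < d" and b: "b < d" using assms(3) by auto
  have "(\<Sum>m<n. (A k m * B m l) $$ (a,b)) = (\<Sum>m<n. if m = m0 then (A k m0 * B m0 l) $$ (a,b) else 0)"
    using assms(2) a b by (intro sum.cong) auto
  also have "\<dots> = (A k m0 * B m0 l) $$ (a,b)" using assms(1) by simp
  finally show "bprod n d A B k l $$ (a, b) = (A k m0 * B m0 l) $$ (a, b)"
    using a b by (simp add: bprod_def)
qed (use assms(3) in \<open>auto simp: bprod_def\<close>)

lemma bprod_two:
  assumes "m0 < n" "m1 < n" "m0 \<noteq> m1"
    "\<And>m. m < n \<Longrightarrow> m \<noteq> m0 \<Longrightarrow> m \<noteq> m1 \<Longrightarrow> A k m * B m l = 0\<^sub>m d d"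
    "A k m0 * B m0 l \<in> carrier_mat d d" "A k m1 * B m1 l \<in> carrier_mat d d"
  shows "bprod n d A B k l = A k m0 * B m0 l + A k m1 * B m1 l"
proof (rule eq_matI)
  fix a b assume "a < dim_row (A k m0 * B m0 l + A k m1 * B m1 l)" "b < dim_col (A k m0 * B m0 l + A k m1 * B m1 l)"
  then have a: "a < d" and b: "b < d" using assms(6) by auto
  have "(\<Sum>m<n. (A k m * B m l) $$ (a,b)) = (\<Sum>m<n. (if m = m0 then (A k m0 * B m0 l) $$ (a,b) else 0)
     + (if m = m1 then (A k m1 * B m1 l) $$ (a,b) else 0))"
    using assms(3,4) a b by (intro sum.cong) auto
  also have "\<dots> = (A k m0 * B m0 l) $$ (a,b) + (A k m1 * B m1 l) $$ (a,b)"
    using assms(1,2) by (simp add: sum.distrib)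
  finally show "bprod n d A B k l $$ (a, b) = (A k m0 * B m0 l + A k m1 * B m1 l) $$ (a, b)"
    using a b assms(5,6) unfolding carrier_mat_def by (simp add: bprod_def)
qed (use assms(5,6) in \<open>auto simp: bprod_def\<close>)

lemma bprod_zero:
  assumes "\<And>m. m < n \<Longrightarrow> A k m * B m l = 0\<^sub>m d d"
  shows "bprod n d A B k l = 0\<^sub>m d d"
  unfolding bprod_def using assms by (intro eq_matI) auto

lemma triple_entry:
  assumes "X \<in> carrier_mat d d" "Y \<in> carrier_mat d d" "Z \<in> carrier_mat d d" "a < d" "b < d"
  shows "(X * Y * Z\<^sup>T) $$ (a,b) = (\<Sum>p<d. \<Sum>q<d. X $$ (a,p) * Y $$ (p,q) * Z $$ (b,q))"
proof -
  have "(X * Y * Z\<^sup>T) $$ (a,b) = (\<Sum>p<d. X $$ (a,p) * (\<Sum>q<d. Y $$ (p,q) * Z $$ (b,q)))"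
    using assms by (simp add: scalar_prod_def lessThan_atLeast0)
  also have "\<dots> = (\<Sum>p<d. \<Sum>q<d. X $$ (a,p) * Y $$ (p,q) * Z $$ (b,q))"
    by (simp add: sum_distrib_left mult.assoc)
  finally show ?thesis .
qed

lemma minv_unique:
  assumes "A \<in> carrier_mat n n" "B \<in> carrier_mat n n" "A * B = 1\<^sub>m n" "B * A = 1\<^sub>m n"
  shows "minv A = B"
proof -
  let ?P = "\<lambda>B. B \<in> carrier_mat (dim_row A) (dim_row A) \<and> A * B = 1\<^sub>m (dim_row A) \<and> B * A = 1\<^sub>m (dim_row A)"
  have "?P B" using assms by auto
  then have P: "?P (minv A)" unfolding minv_def by (rule someI)
  have Pc: "minv A \<in> carrier_mat n n" using P assms by auto
  have "minv A = minv A * (A * B)" using right_mult_one_mat[OF Pc] assms(3) by simp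
  also have "\<dots> = (minv A * A) * B" using P assms by (metis assoc_mult_mat carrier_matD(1))
  also have "\<dots> = B" using P assms by simp
  finally show ?thesis .
qed

lemma spd_minv:
  assumes "spd d Q"
  shows "minv Q \<in> carrier_mat d d \<and> Q * minv Q = 1\<^sub>m d \<and> minv Q * Q = 1\<^sub>m d"
proof -
  have Q: "Q \<in> carrier_mat d d" using assms by (simp add: spd_def)
  have "det Q \<noteq> 0"
  proof
    assume "det Q = 0"
    then obtain v where v: "v \<in> carrier_vec d" "v \<noteq> 0\<^sub>v d" "Q *\<^sub>v v = 0\<^sub>v d"
      using det_0_iff_vec_prod_zero_field[OF Q] by auto
    then have "v \<bullet> (Q *\<^sub>v v) > 0" using assms v(1,2) unfolding spd_def by blast
    moreover have "v \<bullet> (Q *\<^sub>v v) = 0" using v by simp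
    ultimately show False by simp
  qed
  from det_non_zero_imp_unit[OF Q this, of "()"]
  obtain B where B: "B * Q = 1\<^sub>m d" "B \<in> carrier_mat d d"
    unfolding Units_def ring_mat_def by auto
  have QB: "Q * B = 1\<^sub>m d" using mat_mult_left_right_inverse[OF B(2) Q B(1)] .
  have "minv Q = B" by (rule minv_unique[OF Q B(2) QB B(1)])
  then show ?thesis using B QB by simp
qed



lemma trans_carrier:
  "(\<forall>i. j < i \<and> i \<le> j+m \<longrightarrow> F i \<in> carrier_mat d d) \<Longrightarrow> trans F d j m \<in> carrier_mat d d"
  by (induction m) (auto intro!: mult_carrier_mat[of _ d d _ d])

lemma Phi_refl[simp]: "Phi F d k k = 1\<^sub>m d"
  by (simp add: Phi_def)

lemma Phi_step: "j < k \<Longrightarrow> Phi F d k j = F k * Phi F d (k-1) j"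
proof -
  assume jk: "j < k"
  then have e: "k - j = Suc (k - 1 - j)" by simp
  have "j + Suc (k - 1 - j) = k" using jk by simp
  then show ?thesis unfolding Phi_def e by simp
qed

definition Lb :: "(nat \<Rightarrow> real mat) \<Rightarrow> nat \<Rightarrow> nat \<Rightarrow> nat \<Rightarrow> real mat" where
  "Lb F d k j = (if k = j then 1\<^sub>m d else if k = Suc j then - F k else 0\<^sub>m d d)"
definition Gb :: "(nat \<Rightarrow> real mat) \<Rightarrow> nat \<Rightarrow> nat \<Rightarrow> nat \<Rightarrow> real mat" where
  "Gb F d k j = (if j \<le> k then Phi F d k j else 0\<^sub>m d d)"
definition Db :: "(nat \<Rightarrow> real mat) \<Rightarrow> nat \<Rightarrow> nat \<Rightarrow> nat \<Rightarrow> real mat" where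
  "Db Q d k j = (if k = j then Q k else 0\<^sub>m d d)"
definition Dib :: "(nat \<Rightarrow> real mat) \<Rightarrow> nat \<Rightarrow> nat \<Rightarrow> nat \<Rightarrow> real mat" where
  "Dib Q d k j = (if k = j then minv (Q k) else 0\<^sub>m d d)"
definition trb :: "(nat \<Rightarrow> nat \<Rightarrow> real mat) \<Rightarrow> nat \<Rightarrow> nat \<Rightarrow> real mat" where
  "trb A k j = (A j k)\<^sup>T"
definition GDb :: "(nat \<Rightarrow> real mat) \<Rightarrow> (nat \<Rightarrow> real mat) \<Rightarrow> nat \<Rightarrow> nat \<Rightarrow> nat \<Rightarrow> real mat" where
  "GDb F Q d k l = (if l \<le> k then Phi F d k l * Q l else 0\<^sub>m d d)"
definition LDb :: "(nat \<Rightarrow> real mat) \<Rightarrow> (nat \<Rightarrow> real mat) \<Rightarrow> nat \<Rightarrow> nat \<Rightarrow> nat \<Rightarrow> real mat" where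
  "LDb F Q d k l = (if l = k then minv (Q k) else if l = Suc k then - ((F l)\<^sup>T * minv (Q l)) else 0\<^sub>m d d)"

context
  fixes d N :: nat and F Q :: "nat \<Rightarrow> real mat"
  assumes hF: "\<forall>k. 1 \<le> k \<and> k \<le> N \<longrightarrow> F k \<in> carrier_mat d d"
    and hQ: "\<forall>k \<le> N. spd d (Q k)"
begin

lemmas cs = left_mult_zero_mat right_mult_zero_mat mult_carrier_mat[of _ d d _ d]

lemma Fc: "1 \<le> k \<Longrightarrow> k \<le> N \<Longrightarrow> F k \<in> carrier_mat d d" using hF by auto
lemma Qc: "k \<le> N \<Longrightarrow> Q k \<in> carrier_mat d d" using hQ by (auto simp: spd_def)
lemma Qi: "k \<le> N \<Longrightarrow> minv (Q k) \<in> carrier_mat d d \<and> Q k * minv (Q k) = 1\<^sub>m d \<and> minv (Q k) * Q k = 1\<^sub>m d"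
  using hQ spd_minv by auto

lemma Qic: "k \<le> N \<Longrightarrow> minv (Q k) \<in> carrier_mat d d" using Qi by blast
lemma QQi: "k \<le> N \<Longrightarrow> Q k * minv (Q k) = 1\<^sub>m d" using Qi by blast
lemma QiQ: "k \<le> N \<Longrightarrow> minv (Q k) * Q k = 1\<^sub>m d" using Qi by blast

lemma Phic: "j \<le> k \<Longrightarrow> k \<le> N \<Longrightarrow> Phi F d k j \<in> carrier_mat d d"
  unfolding Phi_def by (rule trans_carrier) (use hF in auto)

lemma Lbc: "k \<le> N \<Longrightarrow> Lb F d k j \<in> carrier_mat d d"
  by (auto simp: Lb_def intro: Fc)
lemma Gbc: "k \<le> N \<Longrightarrow> Gb F d k j \<in> carrier_mat d d"
  by (auto simp: Gb_def intro: Phic)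
lemma Dbc: "k \<le> N \<Longrightarrow> Db Q d k j \<in> carrier_mat d d"
  by (auto simp: Db_def intro: Qc)
lemma Dibc: "k \<le> N \<Longrightarrow> Dib Q d k j \<in> carrier_mat d d"
  using Qi by (auto simp: Dib_def)
lemma GDbc: "k \<le> N \<Longrightarrow> GDb F Q d k j \<in> carrier_mat d d"
  using Phic Qc by (auto simp: GDb_def cs)
lemma LDbc: "k \<le> N \<Longrightarrow> l \<le> N \<Longrightarrow> LDb F Q d k l \<in> carrier_mat d d"
  using Fc Qi by (auto simp: LDb_def cs)

lemmas cs2 = cs Fc Qc Qic QQi QiQ Phic Lbc Gbc Dbc Dibc

lemma LG: assumes k: "k \<le> N" and l: "l \<le> N"
  shows "bprod (Suc N) d (Lb F d) (Gb F d) k l = (if k = l then 1\<^sub>m d else 0\<^sub>m d d)"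
proof (cases k)
  case 0
  have "bprod (Suc N) d (Lb F d) (Gb F d) k l = Lb F d k 0 * Gb F d 0 l"
    by (rule bprod_single) (use 0 Gbc in \<open>auto simp: cs2 Lb_def\<close>)
  then show ?thesis using 0 by (auto simp: Lb_def Gb_def)
next
  case (Suc k')
  have Fk: "F k \<in> carrier_mat d d" using Suc k Fc by auto
  have "bprod (Suc N) d (Lb F d) (Gb F d) k l = Lb F d k k * Gb F d k l + Lb F d k k' * Gb F d k' l"
    by (rule bprod_two) (use Suc k Gbc Lbc in \<open>auto simp: cs2 Lb_def\<close>)
  also have "\<dots> = Gb F d k l + (- F k) * Gb F d k' l"
    using Suc k Gbc[of k l] by (simp add: Lb_def)
  also have "\<dots> = (if k = l then 1\<^sub>m d else 0\<^sub>m d d)"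
  proof (cases "l \<le> k'")
    case True
    have P: "Phi F d k' l \<in> carrier_mat d d" using True Suc k Phic by auto
    have "Gb F d k l = F k * Phi F d k' l" using True Suc by (simp add: Gb_def Phi_step)
    moreover have "(- F k) * Gb F d k' l = - (F k * Phi F d k' l)" using True Fk P by (simp add: Gb_def)
    ultimately show ?thesis using True Suc Fk P by (auto intro!: eq_matI)
  next
    case False
    then show ?thesis using Suc Fk by (auto simp: Gb_def)
  qed
  finally show ?thesis .
qed

lemma DDi: assumes k: "k \<le> N" and l: "l \<le> N"
  shows "bprod (Suc N) d (Db Q d) (Dib Q d) k l = (if k = l then 1\<^sub>m d else 0\<^sub>m d d)"
proof (cases "k = l")
  case True
  have "bprod (Suc N) d (Db Q d) (Dib Q d) k l = Db Q d k k * Dib Q d k l"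
    by (rule bprod_single) (use True k Dibc Qi in \<open>auto simp: cs2 Db_def\<close>)
  then show ?thesis using True k Qi by (simp add: Db_def Dib_def)
next
  case False
  show ?thesis using False
    by (simp, intro bprod_zero) (use k Qc Dibc in \<open>auto simp: cs2 Db_def Dib_def\<close>)
qed

lemma GD: assumes k: "k \<le> N" and l: "l \<le> N"
  shows "bprod (Suc N) d (Gb F d) (Db Q d) k l = GDb F Q d k l"
proof (cases "l \<le> k")
  case True
  have "bprod (Suc N) d (Gb F d) (Db Q d) k l = Gb F d k l * Db Q d l l"
    by (rule bprod_single) (use True k l Gbc Qc in \<open>auto simp: cs2 Db_def\<close>)
  then show ?thesis using True by (simp add: Db_def Gb_def GDb_def)
next
  case False
  show ?thesis using False
    by (simp add: GDb_def, intro bprod_zero) (use k l Qc Gbc in \<open>auto simp: cs2 Db_def Gb_def\<close>)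
qed

lemma LD: assumes k: "k \<le> N" and l: "l \<le> N"
  shows "bprod (Suc N) d (trb (Lb F d)) (Dib Q d) k l = LDb F Q d k l"
proof -
  have "bprod (Suc N) d (trb (Lb F d)) (Dib Q d) k l = trb (Lb F d) k l * Dib Q d l l"
    by (rule bprod_single) (use k l Lbc in \<open>auto simp: cs2 Dib_def trb_def\<close>)
  also have "\<dots> = (Lb F d l k)\<^sup>T * minv (Q l)" by (simp add: Dib_def trb_def)
  also have "\<dots> = LDb F Q d k l"
  proof -
    have Ql: "minv (Q l) \<in> carrier_mat d d" using l Qic by auto
    consider "l = k" | "l = Suc k" | "l \<noteq> k" "l \<noteq> Suc k" by blast
    then show ?thesis
    proof cases
      case 1 then show ?thesis using Ql by (simp add: Lb_def LDb_def)
    next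
      case 2
      then have Fl: "F l \<in> carrier_mat d d" using l Fc by auto
      have "(- F l)\<^sup>T * minv (Q l) = - ((F l)\<^sup>T * minv (Q l))"
        using Fl Ql by (simp add: transpose_uminus)
      then show ?thesis using 2 by (simp add: Lb_def LDb_def)
    next
      case 3 then show ?thesis using Ql by (simp add: Lb_def LDb_def)
    qed
  qed
  finally show ?thesis .
qed

lemma cov_fact:
  "markov_cov d N F Q = bm (Suc N) d (Gb F d) * bm (Suc N) d (Db Q d) * bm (Suc N) d (trb (Gb F d))"
proof -
  let ?n = "Suc N"
  have 1: "bm ?n d (Gb F d) * bm ?n d (Db Q d) = bm ?n d (GDb F Q d)"
    by (subst bm_mult) (auto simp: cs2 intro!: bm_cong GD)
  have 2: "bm ?n d (GDb F Q d) * bm ?n d (trb (Gb F d)) = bm ?n d (bprod ?n d (GDb F Q d) (trb (Gb F d)))"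
    by (rule bm_mult) (auto simp: trb_def GDbc Gbc)
  have 3: "markov_cov d N F Q = bm ?n d (bprod ?n d (GDb F Q d) (trb (Gb F d)))"
  proof (rule eq_matI)
    fix i j assume "i < dim_row (bm ?n d (bprod ?n d (GDb F Q d) (trb (Gb F d))))"
      "j < dim_col (bm ?n d (bprod ?n d (GDb F Q d) (trb (Gb F d))))"
    then have i: "i < ?n*d" and j: "j < ?n*d" by auto
    define k where "k = i div d"
    define l where "l = j div d"
    define a where "a = i mod d"
    define b where "b = j mod d"
    have k: "k \<le> N" using div_lt[OF i] k_def by simp
    have l: "l \<le> N" using div_lt[OF j] l_def by simp
    have a: "a < d" using mod_lt[OF i] a_def by simp
    have b: "b < d" using mod_lt[OF j] b_def by simp
    let ?f = "\<lambda>m. \<Sum>p<d. \<Sum>q<d. Phi F d k m $$ (a,p) * Q m $$ (p,q) * Phi F d l m $$ (b,q)"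
    have L: "markov_cov d N F Q $$ (i,j) = sum ?f {0..min k l}"
      using i j unfolding markov_cov_def k_def l_def a_def b_def by (simp add: Let_def)
    have "bm ?n d (bprod ?n d (GDb F Q d) (trb (Gb F d))) $$ (i,j)
        = (\<Sum>m<?n. (GDb F Q d k m * trb (Gb F d) m l) $$ (a,b))"
      using i j a b by (simp add: bm_index bprod_def k_def l_def a_def b_def)
    also have "\<dots> = (\<Sum>m<?n. if m \<in> {0..min k l} then ?f m else 0)"
    proof (rule sum.cong[OF refl])
      fix m assume m: "m \<in> {..<?n}"
      show "(GDb F Q d k m * trb (Gb F d) m l) $$ (a,b) = (if m \<in> {0..min k l} then ?f m else 0)"
      proof (cases "m \<le> k \<and> m \<le> l")
        case True
        have "(GDb F Q d k m * trb (Gb F d) m l) = Phi F d k m * Q m * (Phi F d l m)\<^sup>T"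
          using True by (simp add: GDb_def Gb_def trb_def)
        then show ?thesis using True triple_entry[OF Phic Qc Phic a b] k l by auto
      next
        case False
        have X: "trb (Gb F d) m l \<in> carrier_mat d d" using Gbc[OF l] by (simp add: trb_def)
        have Y: "GDb F Q d k m \<in> carrier_mat d d" using GDbc[OF k] .
        have "GDb F Q d k m * trb (Gb F d) m l = 0\<^sub>m d d"
        proof (cases "m \<le> k")
          case True
          then have "trb (Gb F d) m l = 0\<^sub>m d d" using False by (simp add: trb_def Gb_def)
          then show ?thesis using right_mult_zero_mat[OF Y] by simp
        next
          case False
          then have "GDb F Q d k m = 0\<^sub>m d d" by (simp add: GDb_def)
          then show ?thesis using left_mult_zero_mat[OF X] by simp
        qed
        then show ?thesis using False a b by auto
      qed
    qed
    also have "\<dots> = sum ?f ({..<?n} \<inter> {0..min k l})"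
      by (rule sum.inter_restrict[symmetric]) simp
    also have "{..<?n} \<inter> {0..min k l} = {0..min k l}" using k by auto
    finally show "markov_cov d N F Q $$ (i,j) = bm ?n d (bprod ?n d (GDb F Q d) (trb (Gb F d))) $$ (i,j)"
      using L by simp
  qed (auto simp: markov_cov_def)
  show ?thesis using 1 2 3 by simp
qed

lemma XK:
  assumes k: "k < N"
  shows "bprod (Suc N) d (LDb F Q d) (Lb F d) k k = minv (Q k) + (F (k+1))\<^sup>T * minv (Q (k+1)) * F (k+1)"
proof -
  have F1: "F (Suc k) \<in> carrier_mat d d" using Fc k by auto
  have M1: "minv (Q (Suc k)) \<in> carrier_mat d d" using Qic k by auto
  have M0: "minv (Q k) \<in> carrier_mat d d" using Qic k by auto
  have "bprod (Suc N) d (LDb F Q d) (Lb F d) k k =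
     LDb F Q d k k * Lb F d k k + LDb F Q d k (Suc k) * Lb F d (Suc k) k"
  proof (rule bprod_two)
    fix m assume m: "m < Suc N" "m \<noteq> k" "m \<noteq> Suc k"
    then have "LDb F Q d k m = 0\<^sub>m d d" by (auto simp: LDb_def)
    then show "LDb F Q d k m * Lb F d m k = 0\<^sub>m d d" using left_mult_zero_mat[OF Lbc[of m k]] m by simp
  qed (use k LDbc Lbc in \<open>auto intro!: mult_carrier_mat[of _ d d _ d]\<close>)
  also have "\<dots> = minv (Q k) + (- ((F (Suc k))\<^sup>T * minv (Q (Suc k)))) * (- F (Suc k))"
    using M0 by (simp add: LDb_def Lb_def)
  also have "(- ((F (Suc k))\<^sup>T * minv (Q (Suc k)))) * (- F (Suc k)) = (F (Suc k))\<^sup>T * minv (Q (Suc k)) * F (Suc k)"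
    using F1 M1 by simp
  finally show ?thesis by simp
qed

lemma XK1:
  assumes k: "k < N"
  shows "bprod (Suc N) d (LDb F Q d) (Lb F d) k (Suc k) = - ((F (k+1))\<^sup>T * minv (Q (k+1)))"
proof -
  have F1: "F (Suc k) \<in> carrier_mat d d" using Fc k by auto
  have M1: "minv (Q (Suc k)) \<in> carrier_mat d d" using Qic k by auto
  have "bprod (Suc N) d (LDb F Q d) (Lb F d) k (Suc k) = LDb F Q d k (Suc k) * Lb F d (Suc k) (Suc k)"
  proof (rule bprod_single)
    fix m assume m: "m < Suc N" "m \<noteq> Suc k"
    show "LDb F Q d k m * Lb F d m (Suc k) = 0\<^sub>m d d"
    proof (cases "m = k")
      case True
      then have "Lb F d m (Suc k) = 0\<^sub>m d d" by (simp add: Lb_def)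
      then show ?thesis using right_mult_zero_mat[OF LDbc[of k m]] m k by simp
    next
      case False
      then have "LDb F Q d k m = 0\<^sub>m d d" using m by (auto simp: LDb_def)
      then show ?thesis using left_mult_zero_mat[OF Lbc[of m "Suc k"]] m by simp
    qed
  qed (use k LDbc Lbc in \<open>auto intro!: mult_carrier_mat[of _ d d _ d]\<close>)
  also have "\<dots> = - ((F (k+1))\<^sup>T * minv (Q (k+1)))"
    using F1 M1 by (simp add: LDb_def Lb_def)
  finally show ?thesis .
qed

end

lemma chain:
  assumes c: "A \<in> carrier_mat n n" "Dm \<in> carrier_mat n n" "AT \<in> carrier_mat n n"
    "LT \<in> carrier_mat n n" "Di \<in> carrier_mat n n" "LL \<in> carrier_mat n n"
    and h1: "AT * LT = 1\<^sub>m n" and h2: "Dm * Di = 1\<^sub>m n" and h3: "A * LL = (1\<^sub>m n :: real mat)"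
  shows "(A * Dm * AT) * (LT * Di * LL) = 1\<^sub>m n"
proof -
  have DL: "Di * LL \<in> carrier_mat n n" "A * Dm \<in> carrier_mat n n" "LT * Di * LL \<in> carrier_mat n n"
    using c by (auto intro!: mult_carrier_mat[of _ n n _ n])
  have "(A * Dm * AT) * (LT * Di * LL) = (A * Dm) * (AT * (LT * Di * LL))"
    using assoc_mult_mat[of "A * Dm" n n AT n "LT * Di * LL" n] c DL by metis
  also have "AT * (LT * Di * LL) = AT * (LT * (Di * LL))"
    using assoc_mult_mat[of LT n n Di n LL n] c by metis
  also have "\<dots> = (AT * LT) * (Di * LL)"
    using assoc_mult_mat[of AT n n LT n "Di * LL" n] c DL by metis
  also have "\<dots> = Di * LL" using h1 left_mult_one_mat[OF DL(1)] by simp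
  also have "(A * Dm) * (Di * LL) = A * (Dm * (Di * LL))"
    using assoc_mult_mat[of A n n Dm n "Di * LL" n] c DL by metis
  also have "Dm * (Di * LL) = (Dm * Di) * LL"
    using assoc_mult_mat[of Dm n n Di n LL n] c by metis
  also have "\<dots> = LL" using h2 left_mult_one_mat[OF c(6)] by simp
  finally show ?thesis using h3 by simp
qed

context
  fixes d N :: nat and F Q :: "nat \<Rightarrow> real mat"
  assumes hF: "\<forall>k. 1 \<le> k \<and> k \<le> N \<longrightarrow> F k \<in> carrier_mat d d"
    and hQ: "\<forall>k \<le> N. spd d (Q k)"
begin

lemma minv_cov: "minv (markov_cov d N F Q) = bm (Suc N) d (bprod (Suc N) d (LDb F Q d) (Lb F d))"
proof -
  let ?n = "Suc N"
  let ?A = "bm ?n d (Gb F d)" and ?Dm = "bm ?n d (Db Q d)" and ?AT = "bm ?n d (trb (Gb F d))"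
  let ?LL = "bm ?n d (Lb F d)" and ?LT = "bm ?n d (trb (Lb F d))" and ?Di = "bm ?n d (Dib Q d)"
  note Gc = Gbc[OF hF hQ] and Lc = Lbc[OF hF hQ] and Dc = Dbc[OF hF hQ] and Dic = Dibc[OF hF hQ]
  have "?LL * ?A = bm ?n d (bprod ?n d (Lb F d) (Gb F d))" by (rule bm_mult) (auto simp: Gc Lc)
  also have "\<dots> = bm ?n d (\<lambda>k l. if k = l then 1\<^sub>m d else 0\<^sub>m d d)"
    by (rule bm_cong) (auto simp: LG[OF hF hQ])
  also have "\<dots> = 1\<^sub>m (?n*d)" by (rule bm_one)
  finally have LLA: "?LL * ?A = 1\<^sub>m (?n*d)" .
  have ALL: "?A * ?LL = 1\<^sub>m (?n*d)"
    by (rule mat_mult_left_right_inverse[OF _ _ LLA]) auto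
  have "?Dm * ?Di = bm ?n d (bprod ?n d (Db Q d) (Dib Q d))" by (rule bm_mult) (auto simp: Dc Dic)
  also have "\<dots> = bm ?n d (\<lambda>k l. if k = l then 1\<^sub>m d else 0\<^sub>m d d)"
    by (rule bm_cong) (auto simp: DDi[OF hF hQ])
  also have "\<dots> = 1\<^sub>m (?n*d)" by (rule bm_one)
  finally have DDI: "?Dm * ?Di = 1\<^sub>m (?n*d)" .
  have AT: "?AT = ?A\<^sup>T" unfolding trb_def by (rule bm_transpose[symmetric]) (auto simp: Gc)
  have LT: "?LT = ?LL\<^sup>T" unfolding trb_def by (rule bm_transpose[symmetric]) (auto simp: Lc)
  have ATLT: "?AT * ?LT = 1\<^sub>m (?n*d)"
  proof -
    have "?A\<^sup>T * ?LL\<^sup>T = (?LL * ?A)\<^sup>T" by (rule transpose_mult[symmetric]) auto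
    then show ?thesis unfolding AT LT LLA by simp
  qed
  have X: "?LT * ?Di * ?LL = bm ?n d (bprod ?n d (LDb F Q d) (Lb F d))"
  proof -
    have "?LT * ?Di = bm ?n d (LDb F Q d)"
      by (subst bm_mult) (auto simp: Lc Dic trb_def LD[OF hF hQ] intro!: bm_cong)
    moreover have "bm ?n d (LDb F Q d) * ?LL = bm ?n d (bprod ?n d (LDb F Q d) (Lb F d))"
      by (rule bm_mult) (auto simp: Lc LDbc[OF hF hQ])
    ultimately show ?thesis by simp
  qed
  have CX: "markov_cov d N F Q * (?LT * ?Di * ?LL) = 1\<^sub>m (?n*d)"
    unfolding cov_fact[OF hF hQ] by (rule chain[OF _ _ _ _ _ _ ATLT DDI ALL]) auto
  have XC: "(?LT * ?Di * ?LL) * markov_cov d N F Q = 1\<^sub>m (?n*d)"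
    by (rule mat_mult_left_right_inverse[OF _ _ CX]) (auto simp: markov_cov_def X)
  have "minv (markov_cov d N F Q) = ?LT * ?Di * ?LL"
    by (rule minv_unique[OF _ _ CX XC]) (auto simp: markov_cov_def X)
  then show ?thesis using X by simp
qed

lemma blk_diag: assumes "k < N" shows "blk d (minv (markov_cov d N F Q)) k k =
   minv (Q k) + (F (k+1))\<^sup>T * minv (Q (k+1)) * F (k+1)"
proof -
  have "blk d (bm (Suc N) d (bprod (Suc N) d (LDb F Q d) (Lb F d))) k k = bprod (Suc N) d (LDb F Q d) (Lb F d) k k"
    by (rule blk_bm) (use assms in auto)
  then show ?thesis unfolding minv_cov using XK[OF hF hQ assms] by simp
qed

lemma blk_off: assumes "k < N" shows "blk d (minv (markov_cov d N F Q)) k (k+1) =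
   - ((F (k+1))\<^sup>T * minv (Q (k+1)))"
proof -
  have "blk d (bm (Suc N) d (bprod (Suc N) d (LDb F Q d) (Lb F d))) k (k+1) = bprod (Suc N) d (LDb F Q d) (Lb F d) k (Suc k)"
    by (simp, rule blk_bm) (use assms in auto)
  then show ?thesis unfolding minv_cov using XK1[OF hF hQ assms] by simp
qed

end

theorem proposition4:
  fixes d N :: nat and F1 F2 Q1 Q2 :: "nat \<Rightarrow> real mat"
  assumes "0 < d"
    and "\<forall>k. 1 \<le> k \<and> k \<le> N \<longrightarrow> F1 k \<in> carrier_mat d d \<and> F2 k \<in> carrier_mat d d"
    and "\<forall>k \<le> N. spd d (Q1 k) \<and> spd d (Q2 k)"
  shows "same_reciprocal_model d N (markov_cov d N F1 Q1) (markov_cov d N F2 Q2) \<longleftrightarrow>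
    (\<forall>k. 1 \<le> k \<and> k < N \<longrightarrow>
        minv (Q1 k) + (F1 (k+1))\<^sup>T * minv (Q1 (k+1)) * F1 (k+1) =
        minv (Q2 k) + (F2 (k+1))\<^sup>T * minv (Q2 (k+1)) * F2 (k+1)) \<and>
    (\<forall>k. k < N \<longrightarrow>
        (F1 (k+1))\<^sup>T * minv (Q1 (k+1)) = (F2 (k+1))\<^sup>T * minv (Q2 (k+1)))"
proof -
  have h1: "\<forall>k. 1 \<le> k \<and> k \<le> N \<longrightarrow> F1 k \<in> carrier_mat d d" "\<forall>k \<le> N. spd d (Q1 k)"
    using assms by auto
  have h2: "\<forall>k. 1 \<le> k \<and> k \<le> N \<longrightarrow> F2 k \<in> carrier_mat d d" "\<forall>k \<le> N. spd d (Q2 k)"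
    using assms by auto
  have neg: "(- A = - B) = (A = B)" for A B :: "real mat"
    by (metis uminus_uminus_mat)
  show ?thesis
    unfolding same_reciprocal_model_def
    using blk_diag[OF h1] blk_diag[OF h2] blk_off[OF h1] blk_off[OF h2]
    by (auto simp: neg)
qed

end
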